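(* Assume $I_\delta=0$. Let $S\in\mathsf{X}$ be $\delta$-admissible and $G=\mathcal{G}(S)$. Then $$\|G\|_\infty\le C,\qquad \operatorname{supp}G\subseteq[-C\delta,C\delta],\qquad \Big|\int_{\mathbb{R}}G(x)\,dx\Big|\le C\big(1+\|S''\|_\infty\big)\delta^2$$ for a constant $C$ independent of $S$, $\delta$, $c\in[c_0,c_1]$ and $R_0\in\mathcal{R}_c$.
   Context: $\Delta_1F(x)=F(x+1)-2F(x)+F(x-1)$, $a(k)=\frac{\sin(k/2)}{k/2}$, $\Psi_0'(r)=\mathrm{sgn}(r)$. Potentials: $(\Psi_\delta)_{\delta>0}$ is a family of $C^2$ functions such that $\Psi_\delta'(r)=\mathrm{sgn}(r)$ for $r\notin(-\delta,\delta)$, and $|\Psi_\delta'|\le C_\Psi$, $|\Psi_\delta''|\le C_\Psi/\delta$ on $\mathbb{R}$ with $C_\Psi$ independent of $\delta$; $I_\delta:=\frac12\int_{\mathbb{R}}(\Psi_\delta'-\Psi_0')\,dr$. Unperturbed waves (standing hypothesis, a known result): there are constants $0<c_0<1$ and $x_0,r_0,d_0,D_0>0$ such that for every $c\in[c_0,1)$ the equation $a(k)=c$ has exactly one positive solution $k_c$, and there is a two-parameter family $\mathcal{R}_c$ of functions $R_0\in W^{2,\infty}(\mathbb{R})$ solving $c^2R_0''=\Delta_1(R_0-\mathrm{sgn}(R_0))$ with $R_0(0)=0$, given by $R_0=\bar R_0+\alpha(\cos(k_c\cdot)-1)+\beta\sin(k_c\cdot)$, $(\alpha,\beta)$ in an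 open neighbourhood $U_c$ of $0\in\mathbb{R}^2$, where $\bar R_0$ is a fixed member for which $\lim_{x\to+\infty}\bar R_0(x)$ exists and $\lim_{x\to-\infty}(\bar R_0(x)-\alpha_c^-(\cos(k_cx)-1)-\beta_c^-\sin(k_cx))$ exists for some constants $\alpha_c^-,\beta_c^-$. Every $R_0\in\mathcal{R}_c$ satisfies $\|R_0\|_\infty\le D_0(1-c^2)^{-1}$, $R_0(x)>r_0$ for $x>x_0$, $R_0(x)<-r_0$ for $x<-x_0$, $R_0'(x)>d_0$ for $|x|<x_0$. Setting: $c_1\in(c_0,1)$ fixed, $c\in[c_0,c_1]$, $R_0\in\mathcal{R}_c$ fixed. $\mathsf{X}:=\{S\in W^{2,\infty}(\mathbb{R}):S(0)=0,\ \lim_{x\to+\infty}S(x)\text{ exists}\}$. $\mathcal{G}(S)(x):=\Psi_\delta'(R_0(x)+S(x))-\Psi_0'(R_0(x))$. $S\in\mathsf{X}$ is called $\delta$-admissible if there exist $x_-<0<x_+$ with: $R_0(x_\pm)+S(x_\pm)=\pm\delta$; $R_0(x)+S(x)<-\delta$ for $x<x_-$; $R_0(x)+S(x)>\delta$ for $x>x_+$; and $\frac12R_0'(0)<R_0'(x)+S'(x)<2R_0'(0)$ for $x_-<x<x_+$. *)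

theory Defs
  imports "HOL-Analysis.Analysis"
begin

definition Delta1 :: "(real \<Rightarrow> real) \<Rightarrow> real \<Rightarrow> real" where
  "Delta1 F x = F (x + 1) - 2 * F x + F (x - 1)"

definition afun :: "real \<Rightarrow> real" where
  "afun k = sin (k / 2) / (k / 2)"

definition W2inf :: "(real \<Rightarrow> real) \<Rightarrow> bool" where
  "W2inf f \<longleftrightarrow> bounded (range f) \<and> (\<forall>x. f differentiable at x) \<and>
     bounded (range (deriv f)) \<and> (\<exists>L. \<forall>x y. \<bar>deriv f x - deriv f y\<bar> \<le> L * \<bar>x - y\<bar>)"

text \<open>The sup norm of the second derivative of a W^{2,infinity} function,
  i.e. the (smallest) Lipschitz constant of its first derivative.\<close>
definition norm2inf :: "(real \<Rightarrow> real) \<Rightarrow> real" where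
  "norm2inf f = Inf {L. 0 \<le> L \<and> (\<forall>x y. \<bar>deriv f x - deriv f y\<bar> \<le> L * \<bar>x - y\<bar>)}"

definition C2fun :: "(real \<Rightarrow> real) \<Rightarrow> bool" where
  "C2fun f \<longleftrightarrow> (\<forall>x. f differentiable at x) \<and> (\<forall>x. deriv f differentiable at x) \<and>
     continuous_on UNIV (deriv (deriv f))"

definition potential_family :: "real \<Rightarrow> (real \<Rightarrow> real \<Rightarrow> real) \<Rightarrow> bool" where
  "potential_family CPsi Psi \<longleftrightarrow> (\<forall>\<delta>>0. C2fun (Psi \<delta>) \<and>
      (\<forall>r. r \<notin> {-\<delta><..<\<delta>} \<longrightarrow> deriv (Psi \<delta>) r = sgn r) \<and>
      (\<forall>r. \<bar>deriv (Psi \<delta>) r\<bar> \<le> CPsi) \<and>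
      (\<forall>r. \<bar>deriv (deriv (Psi \<delta>)) r\<bar> \<le> CPsi / \<delta>))"

definition I_delta :: "(real \<Rightarrow> real \<Rightarrow> real) \<Rightarrow> real \<Rightarrow> real" where
  "I_delta Psi \<delta> = (1/2) * (LINT r|lborel. deriv (Psi \<delta>) r - sgn r)"

definition wave_family :: "(real \<Rightarrow> real) \<Rightarrow> (real \<Rightarrow> real \<Rightarrow> real) \<Rightarrow> (real \<Rightarrow> (real \<times> real) set)
    \<Rightarrow> real \<Rightarrow> (real \<Rightarrow> real) set" where
  "wave_family kc Rbar U c =
     {(\<lambda>x. Rbar c x + \<alpha> * (cos (kc c * x) - 1) + \<beta> * sin (kc c * x)) | \<alpha> \<beta>. (\<alpha>, \<beta>) \<in> U c}"

text \<open>The standing hypothesis on the unperturbed waves.  The equation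
  c^2 R0'' = Delta1 (R0 - sgn R0) is understood almost everywhere (R0 in W^{2,infinity}).\<close>
definition unperturbed_waves :: "real \<Rightarrow> real \<Rightarrow> real \<Rightarrow> real \<Rightarrow> real \<Rightarrow> (real \<Rightarrow> real)
    \<Rightarrow> (real \<Rightarrow> real \<Rightarrow> real) \<Rightarrow> (real \<Rightarrow> (real \<times> real) set) \<Rightarrow> bool" where
  "unperturbed_waves c0 x0 r0 d0 D0 kc Rbar U \<longleftrightarrow>
     0 < c0 \<and> c0 < 1 \<and> 0 < x0 \<and> 0 < r0 \<and> 0 < d0 \<and> 0 < D0 \<and>
     (\<forall>c\<in>{c0..<1}.
        0 < kc c \<and> afun (kc c) = c \<and> (\<forall>k>0. afun k = c \<longrightarrow> k = kc c) \<and>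
        open (U c) \<and> (0, 0) \<in> U c \<and>
        (\<exists>L. (Rbar c \<longlongrightarrow> L) at_top) \<and>
        (\<exists>\<alpha>m \<beta>m L. ((\<lambda>x. Rbar c x - \<alpha>m * (cos (kc c * x) - 1) - \<beta>m * sin (kc c * x))
                       \<longlongrightarrow> L) at_bot) \<and>
        (\<forall>R0\<in>wave_family kc Rbar U c.
           W2inf R0 \<and> R0 0 = 0 \<and>
           (AE x in lborel. (deriv R0 has_real_derivative
                 Delta1 (\<lambda>y. R0 y - sgn (R0 y)) x / c\<^sup>2) (at x)) \<and>
           (\<forall>x. \<bar>R0 x\<bar> \<le> D0 / (1 - c\<^sup>2)) \<and>
           (\<forall>x>x0. R0 x > r0) \<and> (\<forall>x< -x0. R0 x < - r0) \<and>
           (\<forall>x. \<bar>x\<bar> < x0 \<longrightarrow> deriv R0 x > d0)))"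

definition in_X :: "(real \<Rightarrow> real) \<Rightarrow> bool" where
  "in_X S \<longleftrightarrow> W2inf S \<and> S 0 = 0 \<and> (\<exists>L. (S \<longlongrightarrow> L) at_top)"

definition admissible :: "real \<Rightarrow> (real \<Rightarrow> real) \<Rightarrow> (real \<Rightarrow> real) \<Rightarrow> bool" where
  "admissible \<delta> R0 S \<longleftrightarrow> (\<exists>xm xp. xm < 0 \<and> 0 < xp \<and>
      R0 xm + S xm = - \<delta> \<and> R0 xp + S xp = \<delta> \<and>
      (\<forall>x<xm. R0 x + S x < - \<delta>) \<and> (\<forall>x>xp. R0 x + S x > \<delta>) \<and>
      (\<forall>x. xm < x \<and> x < xp \<longrightarrow>
         deriv R0 0 / 2 < deriv R0 x + deriv S x \<and> deriv R0 x + deriv S x < 2 * deriv R0 0))"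

definition Gmap :: "(real \<Rightarrow> real \<Rightarrow> real) \<Rightarrow> real \<Rightarrow> (real \<Rightarrow> real) \<Rightarrow> (real \<Rightarrow> real) \<Rightarrow> real \<Rightarrow> real" where
  "Gmap Psi \<delta> R0 S x = deriv (Psi \<delta>) (R0 x + S x) - sgn (R0 x)"

end

theory Submission
  imports Defs
begin


lemma mvt_bound:
  fixes f f' :: "real \<Rightarrow> real"
  assumes d: "\<And>x. (f has_real_derivative f' x) (at x)" and b: "\<And>x. \<bar>f' x\<bar> \<le> B"
  shows "\<bar>f x - f y\<bar> \<le> B * \<bar>x - y\<bar>"
proof -
  have *: "\<bar>f b - f a\<bar> \<le> B * \<bar>b - a\<bar>" if ab: "a < b" for a b
  proof -
    obtain z where "f b - f a = (b - a) * f' z" using MVT2[OF ab, of f f'] d by blast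
    then have "\<bar>f b - f a\<bar> = \<bar>b - a\<bar> * \<bar>f' z\<bar>" by (simp add: abs_mult)
    also have "\<dots> \<le> \<bar>b - a\<bar> * B" using b[of z] by (intro mult_left_mono) auto
    finally show ?thesis by (simp add: mult.commute)
  qed
  show ?thesis
    by (cases x y rule: linorder_cases) (use *[of x y] *[of y x] in \<open>auto simp: abs_minus_commute\<close>)
qed

lemma norm2inf_lip:
  assumes "W2inf S"
  shows "0 \<le> norm2inf S" "\<bar>deriv S x - deriv S y\<bar> \<le> norm2inf S * \<bar>x - y\<bar>"
proof -
  let ?A = "{L. 0 \<le> L \<and> (\<forall>x y. \<bar>deriv S x - deriv S y\<bar> \<le> L * \<bar>x - y\<bar>)}"
  obtain L where L: "\<forall>x y. \<bar>deriv S x - deriv S y\<bar> \<le> L * \<bar>x - y\<bar>" using assms unfolding W2inf_def by blast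
  have "max L 0 \<in> ?A"
  proof -
    have "\<bar>deriv S x - deriv S y\<bar> \<le> max L 0 * \<bar>x - y\<bar>" for x y
      using L[rule_format, of x y] by (smt (verit) abs_ge_zero mult_right_mono max.cobounded1)
    then show ?thesis by auto
  qed
  then have ne: "?A \<noteq> {}" by blast
  show "0 \<le> norm2inf S" unfolding norm2inf_def by (rule cInf_greatest[OF ne]) auto
  show "\<bar>deriv S x - deriv S y\<bar> \<le> norm2inf S * \<bar>x - y\<bar>"
  proof (cases "x = y")
    case True then show ?thesis by simp
  next
    case False
    then have p: "\<bar>x - y\<bar> > 0" by simp
    have "\<bar>deriv S x - deriv S y\<bar> / \<bar>x - y\<bar> \<le> norm2inf S" unfolding norm2inf_def
      by (rule cInf_greatest[OF ne]) (use p in \<open>auto simp: divide_le_eq\<close>)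
    then show ?thesis using p by (simp add: divide_le_eq)
  qed
qed

lemma lip_cont:
  fixes g :: "real \<Rightarrow> real"
  assumes K: "\<forall>x y. \<bar>g x - g y\<bar> \<le> K * \<bar>x - y\<bar>"
  shows "continuous_on UNIV g"
proof -
  have "0 \<le> K" using K[rule_format, of 1 0] by simp
  then have "K-lipschitz_on UNIV g" using K by (intro lipschitz_onI) (auto simp: dist_real_def)
  then show ?thesis by (rule lipschitz_on_continuous_on)
qed

lemma lip_ae_aux:
  fixes g :: "real \<Rightarrow> real"
  assumes K: "\<forall>x y. \<bar>g x - g y\<bar> \<le> K * \<bar>x - y\<bar>"
   and ae: "AE x in lborel. \<exists>d. (g has_real_derivative d) (at x) \<and> \<bar>d\<bar> \<le> M"
   and xy: "x < y" and e: "0 < e"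
  shows "g y - g x \<le> (M + e) * (y - x)"
proof (rule ccontr)
  assume nc: "\<not> ?thesis"
  define h where "h t = g t - (M + e) * t" for t
  have hxy: "h x < h y" using nc by (simp add: h_def algebra_simps)
  from AE_completion[OF ae] obtain N where
    N: "{t \<in> space (completion lborel). \<not> (\<exists>d. (g has_real_derivative d) (at t) \<and> \<bar>d\<bar> \<le> M)} \<subseteq> N"
      "emeasure (completion lborel) N = 0" "N \<in> sets (completion lborel)"
    by (rule AE_E)
  have negN: "negligible N" unfolding negligible_iff_null_sets using N by (auto simp: null_sets_def)
  have Nd: "\<exists>d. (g has_real_derivative d) (at t) \<and> \<bar>d\<bar> \<le> M" if "t \<notin> N" for t
    using N(1) that by auto
  have hlip: "\<bar>h a - h b\<bar> \<le> (K + \<bar>M + e\<bar>) * \<bar>a - b\<bar>" for a b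
  proof -
    have "\<bar>h a - h b\<bar> \<le> \<bar>g a - g b\<bar> + \<bar>(M + e) * (a - b)\<bar>" by (simp add: h_def algebra_simps)
    also have "\<dots> \<le> K * \<bar>a - b\<bar> + \<bar>M + e\<bar> * \<bar>a - b\<bar>" using K by (simp add: abs_mult)
    finally show ?thesis by (simp add: algebra_simps)
  qed
  have neghN: "negligible (h ` N)"
    by (rule negligible_locally_Lipschitz_image[OF _ negN])
       (use hlip in \<open>auto intro!: exI[of _ UNIV] exI[of _ "K + \<bar>M + e\<bar>"]\<close>)
  have "\<not> negligible {h x<..<h y}" using negligible_interval(2)[of "h x" "h y"] hxy by simp
  then obtain w where w: "h x < w" "w < h y" "w \<notin> h ` N"
    using negligible_subset[OF neghN, of "{h x<..<h y}"] by (meson greaterThanLessThan_iff subsetI)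
  have hc: "continuous_on UNIV h" unfolding h_def
    by (intro continuous_intros lip_cont[OF K])
  then have hic: "isCont h t" for t by (simp add: continuous_on_eq_continuous_at)
  define T where "T = {t \<in> {x..y}. h t = w}"
  have Tc: "closed T" unfolding T_def
    by (rule continuous_closed_preimage_constant) (use hc continuous_on_subset in auto)
  obtain t1 where "x \<le> t1" "t1 \<le> y" "h t1 = w" using IVT[of h x w y] w hxy xy hic by fastforce
  then have Tne: "T \<noteq> {}" unfolding T_def by auto
  have Tb: "bdd_above T" unfolding T_def by (auto intro: bdd_aboveI[of _ y])
  define t0 where "t0 = Sup T"
  have t0T: "t0 \<in> T" unfolding t0_def by (rule closed_contains_Sup[OF Tne Tb Tc])
  then have t0: "x \<le> t0" "t0 \<le> y" "h t0 = w" unfolding T_def by auto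
  have "t0 \<noteq> y" using t0 w by auto
  with t0 have t0y: "t0 < y" by simp
  have "t0 \<notin> N" using t0(3) w(3) by auto
  then obtain d where d: "(g has_real_derivative d) (at t0)" "\<bar>d\<bar> \<le> M" using Nd by blast
  have dh: "(h has_real_derivative d - (M + e)) (at t0)" unfolding h_def
    by (rule derivative_eq_intros d refl | simp)+
  have "d - (M + e) < 0" using d(2) e by simp
  from DERIV_neg_dec_right[OF dh this] obtain dd where dd: "dd > 0" "\<forall>s>0. s < dd \<longrightarrow> h t0 > h (t0 + s)"
    by blast
  define s where "s = min (dd / 2) ((y - t0) / 2)"
  have s1: "s \<le> (y - t0) / 2" "s \<le> dd / 2" unfolding s_def by (rule min.cobounded2, rule min.cobounded1)
  have s0: "s > 0" using dd t0y unfolding s_def by auto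
  have s2: "t0 + s \<le> y" using s1(1) t0y by (simp add: field_simps)
  have s3: "s < dd" using s1(2) dd(1) by simp
  note s = s0 s3 s2
  have "h (t0 + s) < w" using dd(2) s t0 by auto
  then obtain t2 where t2: "t0 + s \<le> t2" "t2 \<le> y" "h t2 = w"
    using IVT[of h "t0 + s" w y] w s hic by fastforce
  then have "t2 \<in> T" unfolding T_def using t0 s by auto
  then have "t2 \<le> t0" unfolding t0_def using Tb by (rule cSup_upper)
  then show False using t2 s by simp
qed

lemma lip_ae:
  fixes g :: "real \<Rightarrow> real"
  assumes K: "\<forall>x y. \<bar>g x - g y\<bar> \<le> K * \<bar>x - y\<bar>"
   and ae: "AE x in lborel. \<exists>d. (g has_real_derivative d) (at x) \<and> \<bar>d\<bar> \<le> M"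
  shows "\<bar>g x - g y\<bar> \<le> M * \<bar>x - y\<bar>"
proof -
  have K': "\<forall>x y. \<bar>(- g x) - (- g y)\<bar> \<le> K * \<bar>x - y\<bar>" using K by (simp add: abs_minus_commute)
  have ae': "AE x in lborel. \<exists>d. ((\<lambda>t. - g t) has_real_derivative d) (at x) \<and> \<bar>d\<bar> \<le> M"
    using ae by eventually_elim (metis DERIV_minus abs_minus_cancel)
  have one: "\<bar>g b - g a\<bar> \<le> M * (b - a)" if ab: "a < b" for a b
  proof -
    have "\<bar>g b - g a\<bar> \<le> M * (b - a) + e" if e: "0 < e" for e
    proof -
      have e': "0 < e / (b - a)" using e ab by simp
      have "g b - g a \<le> (M + e / (b - a)) * (b - a)" by (rule lip_ae_aux[OF K ae ab e'])
      moreover have "- g b - - g a \<le> (M + e / (b - a)) * (b - a)"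
        by (rule lip_ae_aux[OF K' ae' ab e'])
      moreover have "(M + e / (b - a)) * (b - a) = M * (b - a) + e" using ab by (simp add: field_simps)
      ultimately show ?thesis by linarith
    qed
    then show ?thesis by (rule field_le_epsilon)
  qed
  show ?thesis
    by (cases x y rule: linorder_cases) (use one[of x y] one[of y x] in \<open>auto simp: abs_minus_commute\<close>)
qed

lemma integrable_bdd_supp:
  fixes g :: "real \<Rightarrow> real"
  assumes m: "g \<in> borel_measurable borel" and b: "\<And>x. \<bar>g x\<bar> \<le> B * indicator {a..b} x"
  shows "integrable lborel g"
proof -
  have i1: "integrable lborel (\<lambda>x. B * indicator {a..b} x :: real)"
    by (intro integrable_mult_right integrable_real_indicator) (auto simp: emeasure_lborel_Icc_eq)
  have m': "g \<in> borel_measurable lborel" using m by simp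
  have ae: "AE x in lborel. norm (g x) \<le> norm (B * indicator {a..b} x :: real)"
    using b by (auto intro!: AE_I2 order_trans[OF _ abs_ge_self])
  show ?thesis by (rule Bochner_Integration.integrable_bound[OF i1 m' ae])
qed

lemma integral_bdd_supp:
  fixes g :: "real \<Rightarrow> real"
  assumes m: "g \<in> borel_measurable borel" and b: "\<And>x. \<bar>g x\<bar> \<le> B * indicator {a..b} x"
    and ab: "a \<le> b"
  shows "\<bar>LINT x|lborel. g x\<bar> \<le> B * (b - a)"
proof -
  have ig: "integrable lborel g" by (rule integrable_bdd_supp[OF m b])
  have ii: "integrable lborel (\<lambda>x. B * indicator {a..b} x :: real)"
    by (intro integrable_mult_right integrable_real_indicator) (auto simp: emeasure_lborel_Icc_eq)
  have "\<bar>LINT x|lborel. g x\<bar> \<le> (LINT x|lborel. \<bar>g x\<bar>)" by (rule integral_abs_bound)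
  also have "\<dots> \<le> (LINT x|lborel. B * indicator {a..b} x)"
    by (rule integral_mono) (use ig ii b in auto)
  also have "\<dots> = B * (b - a)" using ab by simp
  finally show ?thesis .
qed

lemma taylor1:
  fixes u u' :: "real \<Rightarrow> real"
  assumes d: "\<And>t. (u has_real_derivative u' t) (at t)" and u0: "u 0 = 0"
    and l: "\<And>t. \<bar>u' t - u' 0\<bar> \<le> L * \<bar>t\<bar>"
  shows "\<bar>u x - u' 0 * x\<bar> \<le> L * x\<^sup>2"
proof (cases x "0::real" rule: linorder_cases)
  case less
  obtain z where z: "x < z" "z < 0" "u 0 - u x = (0 - x) * u' z" using MVT2[OF less, of u u'] d by blast
  have "u x - u' 0 * x = x * (u' z - u' 0)" using z u0 by (simp add: algebra_simps)
  then have "\<bar>u x - u' 0 * x\<bar> = \<bar>x\<bar> * \<bar>u' z - u' 0\<bar>" by (simp add: abs_mult)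
  also have "\<dots> \<le> \<bar>x\<bar> * (L * \<bar>z\<bar>)" by (intro mult_left_mono l) auto
  also have "\<dots> \<le> \<bar>x\<bar> * (L * \<bar>x\<bar>)"
  proof -
    have "0 \<le> L" using l[of 1] by simp
    then show ?thesis using z by (intro mult_left_mono mult_left_mono) auto
  qed
  finally show ?thesis by (simp add: power2_eq_square algebra_simps abs_mult_self_eq)
next
  case equal then show ?thesis using u0 by simp
next
  case greater
  obtain z where z: "0 < z" "z < x" "u x - u 0 = (x - 0) * u' z" using MVT2[OF greater, of u u'] d by blast
  have "u x - u' 0 * x = x * (u' z - u' 0)" using z u0 by (simp add: algebra_simps)
  then have "\<bar>u x - u' 0 * x\<bar> = \<bar>x\<bar> * \<bar>u' z - u' 0\<bar>" by (simp add: abs_mult)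
  also have "\<dots> \<le> \<bar>x\<bar> * (L * \<bar>z\<bar>)" by (intro mult_left_mono l) auto
  also have "\<dots> \<le> \<bar>x\<bar> * (L * \<bar>x\<bar>)"
  proof -
    have "0 \<le> L" using l[of 1] by simp
    then show ?thesis using z by (intro mult_left_mono mult_left_mono) auto
  qed
  finally show ?thesis by (simp add: power2_eq_square algebra_simps abs_mult_self_eq)
qed



lemma main_fixed:
  fixes Psi :: "real \<Rightarrow> real \<Rightarrow> real" and R0 S :: "real \<Rightarrow> real"
  assumes \<delta>: "0 < \<delta>" and I0: "I_delta Psi \<delta> = 0"
    and C2P: "C2fun (Psi \<delta>)"
    and sg: "\<forall>r. r \<notin> {-\<delta><..<\<delta>} \<longrightarrow> deriv (Psi \<delta>) r = sgn r"
    and bP: "\<forall>r. \<bar>deriv (Psi \<delta>) r\<bar> \<le> CPsi"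
    and b2: "\<forall>r. \<bar>deriv (deriv (Psi \<delta>)) r\<bar> \<le> CPsi / \<delta>"
    and WR: "W2inf R0" and R00: "R0 0 = 0"
    and R0lip: "\<forall>x y. \<bar>deriv R0 x - deriv R0 y\<bar> \<le> M * \<bar>x - y\<bar>"
    and pos: "\<forall>x>x0. R0 x > r0" and neg: "\<forall>x< -x0. R0 x < - r0"
    and dpos: "\<forall>x. \<bar>x\<bar> < x0 \<longrightarrow> deriv R0 x > d0"
    and x0: "0 < x0" and r0: "0 < r0" and d0: "0 < d0"
    and XS: "in_X S" and adm: "admissible \<delta> R0 S"
  shows "(\<forall>x. \<bar>Gmap Psi \<delta> R0 S x\<bar> \<le> CPsi + 1) \<and>
         closure {x. Gmap Psi \<delta> R0 S x \<noteq> 0} \<subseteq> {- (2/d0) * \<delta> .. (2/d0) * \<delta>} \<and>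
         integrable lborel (Gmap Psi \<delta> R0 S) \<and>
         \<bar>LINT x|lborel. Gmap Psi \<delta> R0 S x\<bar> \<le> 2 * CPsi * (M + norm2inf S) * (2/d0)^3 * \<delta>\<^sup>2"
proof -
  define P where "P = deriv (Psi \<delta>)"
  define u where "u = (\<lambda>x. R0 x + S x)"
  define K where "K = 2 / d0"
  have K: "0 < K" using d0 by (simp add: K_def)
  have WS: "W2inf S" "S 0 = 0" using XS by (auto simp: in_X_def)
  have CP0: "0 \<le> CPsi" using bP by (meson abs_ge_zero order_trans)
  have M0: "0 \<le> M" using R0lip[rule_format, of 1 0] by simp
  have dR: "(R0 has_real_derivative deriv R0 x) (at x)" for x
    using WR by (simp add: W2inf_def DERIV_deriv_iff_real_differentiable)
  have dS: "(S has_real_derivative deriv S x) (at x)" for x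
    using WS by (simp add: W2inf_def DERIV_deriv_iff_real_differentiable)
  have du: "(u has_real_derivative deriv R0 x + deriv S x) (at x)" for x
    unfolding u_def by (intro DERIV_add dR dS)
  have dP: "(P has_real_derivative deriv P r) (at r)" for r
    using C2P by (simp add: C2fun_def P_def DERIV_deriv_iff_real_differentiable)
  have Plip: "\<bar>P p - P q\<bar> \<le> CPsi / \<delta> * \<bar>p - q\<bar>" for p q
    by (rule mvt_bound[OF dP]) (use b2 in \<open>simp add: P_def\<close>)
  have u0: "u 0 = 0" using R00 WS by (simp add: u_def)
  obtain xm xp where ad: "xm < 0" "0 < xp" "u xm = -\<delta>" "u xp = \<delta>" "\<forall>x<xm. u x < -\<delta>" "\<forall>x>xp. u x > \<delta>"
     "\<forall>x. xm<x \<and> x<xp \<longrightarrow> deriv R0 0 / 2 < deriv R0 x + deriv S x \<and> deriv R0 x + deriv S x < 2 * deriv R0 0"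
    using adm unfolding admissible_def u_def by blast
  have a0: "deriv R0 0 > d0" using dpos x0 by auto
  have up: "deriv R0 x + deriv S x > d0 / 2" if "xm < x" "x < xp" for x
    using ad(7) that a0 by force
  define a where "a = deriv R0 0 + deriv S 0"
  have a: "a > d0/2" using up[of 0] ad(1,2) unfolding a_def by simp
  have apos: "a > 0" using a d0 by simp
  have xpK: "xp < K * \<delta>"
  proof -
    obtain z where z: "0<z" "z<xp" "u xp - u 0 = (xp - 0) * (deriv R0 z + deriv S z)"
      using MVT2[OF ad(2), of u "\<lambda>x. deriv R0 x + deriv S x"] du by blast
    have "deriv R0 z + deriv S z > d0/2" using up z ad(1) by simp
    then have "xp * (d0/2) < xp * (deriv R0 z + deriv S z)" using ad(2) by simp
    then have "xp * (d0/2) < \<delta>" using z(3) ad(4) u0 by simp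
    then show ?thesis using d0 by (simp add: K_def field_simps)
  qed
  have xmK: "- (K * \<delta>) < xm"
  proof -
    obtain z where z: "xm<z" "z<0" "u 0 - u xm = (0 - xm) * (deriv R0 z + deriv S z)"
      using MVT2[OF ad(1), of u "\<lambda>x. deriv R0 x + deriv S x"] du by blast
    have "deriv R0 z + deriv S z > d0/2" using up z ad(2) by simp
    then have "(- xm) * (d0/2) < (- xm) * (deriv R0 z + deriv S z)" using ad(1) by simp
    then have "(- xm) * (d0/2) < \<delta>" using z(3) ad(3) u0 by simp
    then show ?thesis using d0 by (simp add: K_def field_simps)
  qed
  have Rp: "R0 x > 0" if xp0: "x > 0" for x
  proof (cases "x > x0")
    case True then show ?thesis using pos r0 by force
  next
    case False
    obtain z where z: "0<z" "z<x" "R0 x - R0 0 = (x - 0) * deriv R0 z"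
      using MVT2[OF xp0, of R0 "deriv R0"] dR by blast
    have "deriv R0 z > d0" using dpos z False by auto
    then show ?thesis using z R00 d0 xp0 by (simp add: mult_pos_pos)
  qed
  have Rn: "R0 x < 0" if xn0: "x < 0" for x
  proof (cases "x < - x0")
    case True then show ?thesis using neg r0 by force
  next
    case False
    obtain z where z: "x<z" "z<0" "R0 0 - R0 x = (0 - x) * deriv R0 z"
      using MVT2[OF xn0, of R0 "deriv R0"] dR by blast
    have "deriv R0 z > d0" using dpos z False by auto
    then have "0 < (0 - x) * deriv R0 z" using d0 xn0 by (intro mult_pos_pos) auto
    then show ?thesis using z R00 by simp
  qed
  have sR: "sgn (R0 x) = sgn x" for x
    using Rp[of x] Rn[of x] R00 by (cases x "0::real" rule: linorder_cases) auto
  have Gform: "Gmap Psi \<delta> R0 S x = P (u x) - sgn x" for x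
    by (simp add: Gmap_def P_def u_def sR)
  have Prl: "P r = sgn r" if "\<delta> \<le> \<bar>r\<bar>" for r
  proof -
    have "r \<notin> {-\<delta><..<\<delta>}" using that by (auto simp: abs_if split: if_splits)
    then show ?thesis using sg unfolding P_def by blast
  qed
  have Pu: "P (u x) = sgn x" if "K * \<delta> < \<bar>x\<bar>" for x
  proof (cases "x > 0")
    case True
    then have "u x > \<delta>" using ad(6) xpK that by auto
    then show ?thesis using Prl[of "u x"] True \<delta> by auto
  next
    case False
    then have "x < xm" using xmK that by auto
    then have "u x < -\<delta>" using ad(5) by auto
    have "x < 0" using False that K \<delta> by (smt (verit) mult_pos_pos)
    then show ?thesis using Prl[of "u x"] \<open>u x < -\<delta>\<close> \<delta> by (auto simp: sgn_if)
  qed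
  have Gz: "Gmap Psi \<delta> R0 S x = 0" if "K * \<delta> < \<bar>x\<bar>" for x
    using Pu[OF that] by (simp add: Gform)
  have Gb: "\<bar>Gmap Psi \<delta> R0 S x\<bar> \<le> CPsi + 1" for x
  proof -
    have "\<bar>P (u x)\<bar> \<le> CPsi" using bP by (simp add: P_def)
    moreover have "\<bar>sgn x\<bar> \<le> (1::real)" by (simp add: sgn_if)
    ultimately show ?thesis unfolding Gform by linarith
  qed
  have Gind: "\<bar>Gmap Psi \<delta> R0 S x\<bar> \<le> (CPsi + 1) * indicator {- (K*\<delta>) .. K*\<delta>} x" for x
    using Gb[of x] Gz[of x] by (auto simp: indicator_def abs_le_iff)
  have cP: "continuous_on UNIV P"
    using dP by (intro continuous_at_imp_continuous_on) (auto intro: DERIV_isCont)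
  have cu: "continuous_on UNIV u"
    using du by (intro continuous_at_imp_continuous_on) (auto intro: DERIV_isCont)
  have mPu: "(\<lambda>x. P (u x)) \<in> borel_measurable borel"
    by (intro borel_measurable_continuous_onI continuous_on_compose2[OF cP cu]) auto
  have Geq: "Gmap Psi \<delta> R0 S = (\<lambda>x. P (u x) - sgn x)" by (rule ext) (simp add: Gform)
  have Gm: "Gmap Psi \<delta> R0 S \<in> borel_measurable borel"
    unfolding Geq using mPu by measurable
  have Gi: "integrable lborel (Gmap Psi \<delta> R0 S)" by (rule integrable_bdd_supp[OF Gm Gind])
  have supp: "closure {x. Gmap Psi \<delta> R0 S x \<noteq> 0} \<subseteq> {- (2/d0) * \<delta> .. (2/d0) * \<delta>}"
  proof (rule closure_minimal)
    show "{x. Gmap Psi \<delta> R0 S x \<noteq> 0} \<subseteq> {- (2/d0) * \<delta> .. (2/d0) * \<delta>}"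
      using Gz unfolding K_def by (force simp: abs_le_iff not_less)
  qed simp
  define f where "f r = P r - sgn r" for r
  have fm: "f \<in> borel_measurable borel"
  proof -
    have "P \<in> borel_measurable borel" by (rule borel_measurable_continuous_onI[OF cP])
    then show ?thesis unfolding f_def[abs_def] by measurable
  qed
  have find: "\<bar>f r\<bar> \<le> (CPsi + 1) * indicator {-\<delta>..\<delta>} r" for r
  proof (cases "\<bar>r\<bar> \<le> \<delta>")
    case True
    have "\<bar>P r\<bar> \<le> CPsi" using bP by (simp add: P_def)
    moreover have "\<bar>sgn r\<bar> \<le> (1::real)" by (simp add: sgn_if)
    ultimately have "\<bar>f r\<bar> \<le> CPsi + 1" unfolding f_def by linarith
    moreover have "r \<in> {-\<delta>..\<delta>}" using True by (auto simp: abs_le_iff)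
    ultimately show ?thesis by simp
  next
    case False
    then have "f r = 0" using Prl[of r] by (simp add: f_def)
    moreover have "r \<notin> {-\<delta>..\<delta>}" using False by (auto simp: abs_le_iff)
    ultimately show ?thesis by simp
  qed
  have fi: "integrable lborel f" by (rule integrable_bdd_supp[OF fm find])
  have fint: "(LINT r|lborel. f r) = 0"
    using I0 by (simp add: I_delta_def f_def P_def)
  have fai: "integrable lborel (\<lambda>x. f (0 + a * x))"
    by (rule lborel_integrable_real_affine[OF fi]) (use apos in simp)
  have fa0: "(LINT x|lborel. f (0 + a * x)) = 0"
    using lborel_integral_real_affine[of a f 0] apos fint by simp
  define H where "H x = P (u x) - P (a * x)" for x
  have GH: "Gmap Psi \<delta> R0 S = (\<lambda>x. H x + f (0 + a * x))"
    by (rule ext) (simp add: Gform H_def f_def sgn_mult apos)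
  have Hm: "H \<in> borel_measurable borel"
  proof -
    have "(\<lambda>x. P (a * x)) \<in> borel_measurable borel"
      by (intro borel_measurable_continuous_onI continuous_on_compose2[OF cP]) (auto intro!: continuous_intros)
    then show ?thesis using mPu unfolding H_def[abs_def] by measurable
  qed
  define L where "L = M + norm2inf S"
  have L0: "0 \<le> L" using M0 norm2inf_lip(1)[OF WS(1)] by (simp add: L_def)
  have tay: "\<bar>u x - a * x\<bar> \<le> L * x\<^sup>2" for x
  proof -
    have "\<bar>u x - (\<lambda>t. deriv R0 t + deriv S t) 0 * x\<bar> \<le> L * x\<^sup>2"
    proof (rule taylor1[OF du u0])
      fix t
      have "\<bar>deriv R0 t - deriv R0 0\<bar> \<le> M * \<bar>t\<bar>" using R0lip by (metis diff_zero)
      moreover have "\<bar>deriv S t - deriv S 0\<bar> \<le> norm2inf S * \<bar>t\<bar>"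
        using norm2inf_lip(2)[OF WS(1), of t 0] by simp
      ultimately show "\<bar>deriv R0 t + deriv S t - (deriv R0 0 + deriv S 0)\<bar> \<le> L * \<bar>t\<bar>"
        unfolding L_def by (simp add: algebra_simps)
    qed
    then show ?thesis by (simp add: a_def)
  qed
  have Hz: "H x = 0" if "K * \<delta> < \<bar>x\<bar>" for x
  proof -
    have "\<bar>a * x\<bar> = a * \<bar>x\<bar>" using apos by (simp add: abs_mult)
    also have "a * \<bar>x\<bar> \<ge> (d0/2) * (K * \<delta>)" using a that K \<delta> d0
      by (intro mult_mono) auto
    finally have "\<delta> \<le> \<bar>a * x\<bar>" using d0 by (simp add: K_def)
    then have "P (a * x) = sgn x" using Prl[of "a*x"] apos by (simp add: sgn_mult)
    then show ?thesis using Pu[OF that] by (simp add: H_def)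
  qed
  have Hb: "\<bar>H x\<bar> \<le> CPsi * L * K\<^sup>2 * \<delta>" if "\<bar>x\<bar> \<le> K * \<delta>" for x
  proof -
    have "\<bar>H x\<bar> \<le> CPsi / \<delta> * \<bar>u x - a * x\<bar>" unfolding H_def by (rule Plip)
    also have "\<dots> \<le> CPsi / \<delta> * (L * x\<^sup>2)" using CP0 \<delta> tay by (intro mult_left_mono) auto
    also have "\<dots> \<le> CPsi / \<delta> * (L * (K * \<delta>)\<^sup>2)"
    proof -
      have "x\<^sup>2 \<le> (K * \<delta>)\<^sup>2" using that by (metis abs_le_square_iff abs_ge_zero order_trans abs_of_nonneg K \<delta> mult_pos_pos less_imp_le)
      then show ?thesis using CP0 \<delta> L0 by (intro mult_left_mono) auto
    qed
    also have "\<dots> = CPsi * L * K\<^sup>2 * \<delta>" using \<delta> by (simp add: power2_eq_square field_simps)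
    finally show ?thesis .
  qed
  have Hind: "\<bar>H x\<bar> \<le> (CPsi * L * K\<^sup>2 * \<delta>) * indicator {- (K*\<delta>) .. K*\<delta>} x" for x
    using Hb[of x] Hz[of x] by (auto simp: indicator_def abs_le_iff)
  have Hi: "integrable lborel H" by (rule integrable_bdd_supp[OF Hm Hind])
  have "(LINT x|lborel. Gmap Psi \<delta> R0 S x) = (LINT x|lborel. H x) + (LINT x|lborel. f (0 + a * x))"
    unfolding GH by (rule Bochner_Integration.integral_add[OF Hi fai])
  then have GHi: "(LINT x|lborel. Gmap Psi \<delta> R0 S x) = (LINT x|lborel. H x)" using fa0 by simp
  have "\<bar>LINT x|lborel. H x\<bar> \<le> (CPsi * L * K\<^sup>2 * \<delta>) * (K*\<delta> - - (K*\<delta>))"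
    by (rule integral_bdd_supp[OF Hm Hind]) (use K \<delta> in simp)
  also have "\<dots> = 2 * CPsi * (M + norm2inf S) * (2/d0)^3 * \<delta>\<^sup>2"
    by (simp add: L_def K_def power2_eq_square power3_eq_cube field_simps)
  finally have Iest: "\<bar>LINT x|lborel. Gmap Psi \<delta> R0 S x\<bar> \<le> 2 * CPsi * (M + norm2inf S) * (2/d0)^3 * \<delta>\<^sup>2"
    using GHi by simp
  show ?thesis using Gb supp Gi Iest by blast
qed



lemma abs3: "\<bar>a\<bar> \<le> B \<Longrightarrow> \<bar>b\<bar> \<le> B \<Longrightarrow> \<bar>c\<bar> \<le> B \<Longrightarrow> \<bar>a - 2 * b + c\<bar> \<le> 4 * (B::real)"
  by (simp add: abs_le_iff)

lemma R0lip_lemma: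
  fixes R0 :: "real \<Rightarrow> real"
  assumes WR: "W2inf R0"
    and ode: "AE x in lborel. (deriv R0 has_real_derivative Delta1 (\<lambda>y. R0 y - sgn (R0 y)) x / c\<^sup>2) (at x)"
    and bd: "\<forall>x. \<bar>R0 x\<bar> \<le> D0 / (1 - c\<^sup>2)"
    and c: "c0 \<le> c" "c \<le> c1" "0 < c0" "c1 < 1" and D0: "0 < D0"
  shows "\<forall>x y. \<bar>deriv R0 x - deriv R0 y\<bar> \<le> (4 * (D0 / (1 - c1\<^sup>2) + 1) / c0\<^sup>2) * \<bar>x - y\<bar>"
proof (intro allI)
  fix x y
  define B where "B = D0 / (1 - c1\<^sup>2) + 1"
  have c2: "c0\<^sup>2 \<le> c\<^sup>2" "c\<^sup>2 \<le> c1\<^sup>2" using c by (auto intro: power_mono)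
  have c1p: "0 < 1 - c1\<^sup>2" using c by (simp add: power_less_one_iff abs_less_iff)
  have "D0 / (1 - c\<^sup>2) \<le> D0 / (1 - c1\<^sup>2)"
    by (rule divide_left_mono) (use c2 c1p D0 in auto)
  then have Fb: "\<bar>R0 y - sgn (R0 y)\<bar> \<le> B" for y
  proof -
    have "\<bar>sgn (R0 y)\<bar> \<le> (1::real)" by (simp add: sgn_if)
    then show ?thesis using bd[rule_format, of y] \<open>D0 / (1 - c\<^sup>2) \<le> D0 / (1 - c1\<^sup>2)\<close>
      unfolding B_def by linarith
  qed
  have B0: "0 \<le> B" using Fb[of 0] by linarith
  have Db: "\<bar>Delta1 (\<lambda>y. R0 y - sgn (R0 y)) t / c\<^sup>2\<bar> \<le> 4 * B / c0\<^sup>2" for t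
  proof -
    have "\<bar>Delta1 (\<lambda>y. R0 y - sgn (R0 y)) t\<bar> \<le> 4 * B"
      using abs3[OF Fb[of "t+1"] Fb[of t] Fb[of "t-1"]] unfolding Delta1_def by simp
    then have "\<bar>Delta1 (\<lambda>y. R0 y - sgn (R0 y)) t\<bar> / c\<^sup>2 \<le> 4 * B / c\<^sup>2"
      using c by (intro divide_right_mono) auto
    also have "\<dots> \<le> 4 * B / c0\<^sup>2" using c2 c B0 by (intro divide_left_mono) auto
    finally show ?thesis by (simp add: abs_div)
  qed
  obtain L where L: "\<forall>x y. \<bar>deriv R0 x - deriv R0 y\<bar> \<le> L * \<bar>x - y\<bar>" using WR unfolding W2inf_def by blast
  have ae: "AE x in lborel. \<exists>d. (deriv R0 has_real_derivative d) (at x) \<and> \<bar>d\<bar> \<le> 4 * B / c0\<^sup>2"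
    using ode by eventually_elim (use Db in blast)
  show "\<bar>deriv R0 x - deriv R0 y\<bar> \<le> (4 * (D0 / (1 - c1\<^sup>2) + 1) / c0\<^sup>2) * \<bar>x - y\<bar>"
    using lip_ae[OF L ae] unfolding B_def by simp
qed

theorem lemma3p3:
  fixes c0 c1 x0 r0 d0 D0 CPsi :: real
    and kc :: "real \<Rightarrow> real" and Rbar :: "real \<Rightarrow> real \<Rightarrow> real"
    and U :: "real \<Rightarrow> (real \<times> real) set" and Psi :: "real \<Rightarrow> real \<Rightarrow> real"
  assumes "unperturbed_waves c0 x0 r0 d0 D0 kc Rbar U"
    and "potential_family CPsi Psi"
    and "c0 < c1" and "c1 < 1"
  shows "\<exists>C. \<forall>\<delta>>0. I_delta Psi \<delta> = 0 \<longrightarrow>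
           (\<forall>c\<in>{c0..c1}. \<forall>R0\<in>wave_family kc Rbar U c. \<forall>S.
              in_X S \<and> admissible \<delta> R0 S \<longrightarrow>
                (\<forall>x. \<bar>Gmap Psi \<delta> R0 S x\<bar> \<le> C) \<and>
                closure {x. Gmap Psi \<delta> R0 S x \<noteq> 0} \<subseteq> {- C * \<delta> .. C * \<delta>} \<and>
                integrable lborel (Gmap Psi \<delta> R0 S) \<and>
                \<bar>LINT x|lborel. Gmap Psi \<delta> R0 S x\<bar> \<le> C * (1 + norm2inf S) * \<delta>\<^sup>2)"
proof -
  note uw = assms(1)[unfolded unperturbed_waves_def]
  have c0: "0 < c0" and x0: "0 < x0" and r0: "0 < r0" and d0: "0 < d0" and D0: "0 < D0"
    using uw by auto
  have PF: "\<And>\<delta>. 0 < \<delta> \<Longrightarrow> C2fun (Psi \<delta>) \<and>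
      (\<forall>r. r \<notin> {-\<delta><..<\<delta>} \<longrightarrow> deriv (Psi \<delta>) r = sgn r) \<and>
      (\<forall>r. \<bar>deriv (Psi \<delta>) r\<bar> \<le> CPsi) \<and>
      (\<forall>r. \<bar>deriv (deriv (Psi \<delta>)) r\<bar> \<le> CPsi / \<delta>)"
    using assms(2) unfolding potential_family_def by blast
  have CP0: "0 \<le> CPsi" using PF[of 1] by (meson abs_ge_zero order_trans zero_less_one)
  define M where "M = 4 * (D0 / (1 - c1\<^sup>2) + 1) / c0\<^sup>2"
  have "c1\<^sup>2 < 1\<^sup>2" using assms(3,4) c0 by (intro power_strict_mono) auto
  then have c1p: "0 < 1 - c1\<^sup>2" by simp
  have M0: "0 \<le> M" unfolding M_def using c1p D0 by simp
  define K where "K = 2 / d0"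
  have K0: "0 < K" using d0 by (simp add: K_def)
  define C where "C = CPsi + 1 + K + 2 * CPsi * K^3 * (M + 1)"
  show ?thesis
  proof (intro exI[of _ C] allI impI ballI)
    fix \<delta> c R0 S
    assume \<delta>: "0 < \<delta>" and I0: "I_delta Psi \<delta> = 0" and c: "c \<in> {c0..c1}"
      and R0: "R0 \<in> wave_family kc Rbar U c" and SS: "in_X S \<and> admissible \<delta> R0 S"
    have "c \<in> {c0..<1}" using c assms by auto
    then have RF: "W2inf R0 \<and> R0 0 = 0 \<and>
           (AE x in lborel. (deriv R0 has_real_derivative
                 Delta1 (\<lambda>y. R0 y - sgn (R0 y)) x / c\<^sup>2) (at x)) \<and>
           (\<forall>x. \<bar>R0 x\<bar> \<le> D0 / (1 - c\<^sup>2)) \<and>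
           (\<forall>x>x0. R0 x > r0) \<and> (\<forall>x< -x0. R0 x < - r0) \<and>
           (\<forall>x. \<bar>x\<bar> < x0 \<longrightarrow> deriv R0 x > d0)"
      using uw R0 by blast
    have lip: "\<forall>x y. \<bar>deriv R0 x - deriv R0 y\<bar> \<le> M * \<bar>x - y\<bar>"
      unfolding M_def using RF c c0 assms(4) D0 by (intro R0lip_lemma) auto
    have PFd: "C2fun (Psi \<delta>)" "\<forall>r. r \<notin> {-\<delta><..<\<delta>} \<longrightarrow> deriv (Psi \<delta>) r = sgn r"
       "\<forall>r. \<bar>deriv (Psi \<delta>) r\<bar> \<le> CPsi" "\<forall>r. \<bar>deriv (deriv (Psi \<delta>)) r\<bar> \<le> CPsi / \<delta>"
      using PF[OF \<delta>] by auto
    have main: "(\<forall>x. \<bar>Gmap Psi \<delta> R0 S x\<bar> \<le> CPsi + 1) \<and>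
         closure {x. Gmap Psi \<delta> R0 S x \<noteq> 0} \<subseteq> {- (2/d0) * \<delta> .. (2/d0) * \<delta>} \<and>
         integrable lborel (Gmap Psi \<delta> R0 S) \<and>
         \<bar>LINT x|lborel. Gmap Psi \<delta> R0 S x\<bar> \<le> 2 * CPsi * (M + norm2inf S) * (2/d0)^3 * \<delta>\<^sup>2"
      by (rule main_fixed[of \<delta> Psi CPsi R0 M x0 r0 d0 S, OF \<delta> I0 PFd]) (use RF lip x0 r0 d0 SS in auto)
    have n0: "0 \<le> norm2inf S" using SS norm2inf_lip(1) by (auto simp: in_X_def)
    have "C \<ge> CPsi + 1" "C \<ge> K" "C \<ge> 2 * CPsi * K^3 * (M + 1)"
      unfolding C_def using CP0 K0 M0 by auto
    show "(\<forall>x. \<bar>Gmap Psi \<delta> R0 S x\<bar> \<le> C) \<and>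
                closure {x. Gmap Psi \<delta> R0 S x \<noteq> 0} \<subseteq> {- C * \<delta> .. C * \<delta>} \<and>
                integrable lborel (Gmap Psi \<delta> R0 S) \<and>
                \<bar>LINT x|lborel. Gmap Psi \<delta> R0 S x\<bar> \<le> C * (1 + norm2inf S) * \<delta>\<^sup>2"
    proof (intro conjI)
      show "\<forall>x. \<bar>Gmap Psi \<delta> R0 S x\<bar> \<le> C" using main \<open>C \<ge> CPsi + 1\<close> by (meson order_trans)
      have "{- K * \<delta> .. K * \<delta>} \<subseteq> {- C * \<delta> .. C * \<delta>}"
        using \<open>C \<ge> K\<close> \<delta> by (auto intro: order_trans mult_right_mono)
      then show "closure {x. Gmap Psi \<delta> R0 S x \<noteq> 0} \<subseteq> {- C * \<delta> .. C * \<delta>}"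
        using main unfolding K_def by auto
      show "integrable lborel (Gmap Psi \<delta> R0 S)" using main by blast
      have "2 * CPsi * (M + norm2inf S) * (2/d0)^3 * \<delta>\<^sup>2 = (2 * CPsi * K^3) * (M + norm2inf S) * \<delta>\<^sup>2"
        by (simp add: K_def)
      also have "\<dots> \<le> (2 * CPsi * K^3) * ((M + 1) * (1 + norm2inf S)) * \<delta>\<^sup>2"
      proof -
        have "M + norm2inf S \<le> (M + 1) * (1 + norm2inf S)" using M0 n0 by (simp add: algebra_simps)
        then show ?thesis using CP0 K0 by (intro mult_right_mono mult_left_mono) auto
      qed
      also have "\<dots> = (2 * CPsi * K^3 * (M + 1)) * (1 + norm2inf S) * \<delta>\<^sup>2" by simp
      also have "\<dots> \<le> C * (1 + norm2inf S) * \<delta>\<^sup>2"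
        using \<open>C \<ge> 2 * CPsi * K^3 * (M + 1)\<close> n0 by (intro mult_right_mono) auto
      finally show "\<bar>LINT x|lborel. Gmap Psi \<delta> R0 S x\<bar> \<le> C * (1 + norm2inf S) * \<delta>\<^sup>2"
        using main by linarith
    qed
  qed
qed


end
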